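(* Let $n_0$ be a positive integer and let $X,Y$ be complex linear spaces. A mapping $f:X\to Y$ satisfies $$f(2\mu x+\mu y)+f(\mu x+2\mu y)=\mu[f(3x)+f(3y)]$$ for all $x,y\in X$ and all $\mu\in\mathbb{T}^1_{n_0}$ if and only if $f$ is $\mathbb{C}$-linear.
   Context: $\mathbb{T}^1_{n_0}:=\{e^{i\theta}: 0\le\theta\le 2\pi/n_0\}$. *)

theory Defs
  imports "HOL-Analysis.Analysis"
begin

definition arcT :: "nat \<Rightarrow> complex set" where
  "arcT n0 = {cis \<theta> | \<theta>. 0 \<le> \<theta> \<and> \<theta> \<le> 2 * pi / real n0}"

end

theory Submission
  imports Defs
begin

lemma fwd:
  fixes n0 :: nat
    and scaleX :: "complex \<Rightarrow> 'a::ab_group_add \<Rightarrow> 'a"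
    and scaleY :: "complex \<Rightarrow> 'b::ab_group_add \<Rightarrow> 'b"
    and f :: "'a \<Rightarrow> 'b"
  assumes n0: "n0 > 0"
    and VX: "vector_space scaleX"
    and VY: "vector_space scaleY"
    and H: "\<forall>x y. \<forall>\<mu>\<in>arcT n0.
            f (scaleX (2 * \<mu>) x + scaleX \<mu> y) + f (scaleX \<mu> x + scaleX (2 * \<mu>) y)
              = scaleY \<mu> (f (scaleX 3 x) + f (scaleX 3 y))"
  shows "Vector_Spaces.linear scaleX scaleY f"
proof -
  interpret X: vector_space scaleX by fact
  interpret Y: vector_space scaleY by fact
  have two: "\<And>v. v + v = scaleY 2 v"
    using Y.scale_left_distrib[of 1 1] by simp
  have two': "\<And>v. v + v = scaleX 2 v"
    using X.scale_left_distrib[of 1 1] by simp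
  have one: "1 \<in> arcT n0" unfolding arcT_def using n0
    by (auto intro!: exI[of _ 0])
  have H1: "\<And>x y. f (scaleX 2 x + y) + f (x + scaleX 2 y) = f (scaleX 3 x) + f (scaleX 3 y)"
    using H one by (metis X.scale_one Y.scale_one mult.right_neutral)
  define \<nu> where "\<nu> = cis (pi / n0)"
  have nuarc: "\<nu> \<in> arcT n0" unfolding arcT_def \<nu>_def using n0
    by (auto intro!: exI[of _ "pi / n0"] simp: divide_right_mono)
  have nu1: "\<nu> \<noteq> 1"
  proof
    assume "\<nu> = 1"
    hence "Re (cis (pi / n0)) = 1" unfolding \<nu>_def by simp
    hence "cos (pi / n0) = 1" by simp
    moreover have "cos (pi / n0) < 1"
    proof -
      have "0 < pi / n0" using n0 by simp
      moreover have "pi / n0 \<le> pi" using n0 by (simp add: divide_le_eq)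
      ultimately show ?thesis
        using cos_monotone_0_pi[of 0 "pi / n0"] by simp
    qed
    ultimately show False by simp
  qed
  have nupow: "\<nu> ^ n0 = -1"
  proof -
    have "real n0 * (pi / real n0) = pi" using n0 by simp
    thus ?thesis unfolding \<nu>_def by (metis Complex.DeMoivre cis_pi)
  qed
  have f0: "f 0 = 0"
  proof -
    have "f 0 + f 0 = scaleY \<nu> (f 0 + f 0)"
      using H nuarc by (metis X.scale_zero_right add_0)
    hence "scaleY (1 - \<nu>) (f 0 + f 0) = 0"
      by (simp add: Y.scale_left_diff_distrib)
    hence "f 0 + f 0 = 0" using nu1 by simp
    thus ?thesis using two by simp
  qed
  have hom: "\<And>\<mu> z. \<mu> \<in> arcT n0 \<Longrightarrow> f (scaleX \<mu> z) = scaleY \<mu> (f z)"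
  proof -
    fix \<mu> z assume m: "\<mu> \<in> arcT n0"
    define x where "x = scaleX (1/3) z"
    have "f (scaleX (2 * \<mu>) x) + f (scaleX \<mu> x) = scaleY \<mu> (f (scaleX 3 x))"
      using H m f0 by (metis X.scale_zero_right add_0 add_0_right)
    moreover have "f (scaleX 2 (scaleX \<mu> x)) + f (scaleX \<mu> x) = f (scaleX 3 (scaleX \<mu> x))"
      using H1[of "scaleX \<mu> x" 0] f0 by simp
    moreover have "scaleX 3 x = z" "scaleX 3 (scaleX \<mu> x) = scaleX \<mu> z"
      unfolding x_def by (simp_all add: mult.commute)
    ultimately show "f (scaleX \<mu> z) = scaleY \<mu> (f z)" by (simp add: mult.commute)
  qed
  have pow: "\<And>\<mu> k z. \<mu> \<in> arcT n0 \<Longrightarrow> f (scaleX (\<mu> ^ k) z) = scaleY (\<mu> ^ k) (f z)"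
  proof -
    fix \<mu> k z assume m: "\<mu> \<in> arcT n0"
    show "f (scaleX (\<mu> ^ k) z) = scaleY (\<mu> ^ k) (f z)"
    proof (induction k)
      case 0 then show ?case by simp
    next
      case (Suc k)
      have "f (scaleX (\<mu> ^ Suc k) z) = f (scaleX \<mu> (scaleX (\<mu> ^ k) z))" by (simp only: X.scale_scale power_Suc)
      also have "\<dots> = scaleY \<mu> (scaleY (\<mu> ^ k) (f z))" by (simp only: hom[OF m] Suc)
      finally show ?case by (simp add: mult.commute)
    qed
  qed
  have odd: "\<And>z. f (- z) = - f z"
    using pow[OF nuarc, of n0] nupow by simp
  have dbl: "\<And>u. f (scaleX 2 u) = scaleY 2 (f u)"
  proof -
    fix u
    have "f (scaleX 2 (scaleX (2/3) u) + scaleX (-1/3) u) + f (scaleX (2/3) u + scaleX 2 (scaleX (-1/3) u))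
      = f (scaleX 3 (scaleX (2/3) u)) + f (scaleX 3 (scaleX (-1/3) u))" by (rule H1)
    moreover have "scaleX 2 (scaleX (2/3) u) + scaleX (-1/3) u = u"
      by (simp add: X.scale_left_distrib[symmetric] X.scale_left_diff_distrib[symmetric])
    moreover have "scaleX (2/3) u + scaleX 2 (scaleX (-1/3) u) = 0"
      by (simp add: X.scale_left_distrib[symmetric] X.scale_left_diff_distrib[symmetric])
    moreover have "scaleX 3 (scaleX (2/3) u) = scaleX 2 u" by simp
    moreover have "scaleX 3 (scaleX (-1/3) u) = - u" by simp
    ultimately have "f u = f (scaleX 2 u) - f u" using f0 odd by simp
    thus "f (scaleX 2 u) = scaleY 2 (f u)" using two by (metis diff_eq_eq)
  qed
  have tri: "\<And>u. f (scaleX 3 u) = scaleY 3 (f u)"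
  proof -
    fix u
    have "f (scaleX 3 u) = f (scaleX 2 u) + f u" using H1[of u 0] f0 by simp
    also have "\<dots> = scaleY 2 (f u) + scaleY 1 (f u)" using dbl by simp
    also have "\<dots> = scaleY 3 (f u)" using Y.scale_left_distrib[of 2 1 "f u"] by simp
    finally show "f (scaleX 3 u) = scaleY 3 (f u)" .
  qed
  have add2: "\<And>p q. f (scaleX 2 p + q) = scaleY 2 (f p) + f q"
  proof -
    fix p q
    let ?A = "f (scaleX 2 p + q)" and ?B = "f (p + scaleX 2 q)"
    have e1: "?A + ?B = scaleY 3 (f p) + scaleY 3 (f q)" using H1[of p q] tri by simp
    define x where "x = scaleX (1/3) (scaleX 2 p + q)"
    define y where "y = scaleX (-1/3) (p + scaleX 2 q)"
    have "f (scaleX 2 x + y) + f (x + scaleX 2 y) = f (scaleX 3 x) + f (scaleX 3 y)" by (rule H1)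
    moreover have "scaleX 2 x + y = p"
      unfolding x_def y_def using X.scale_left_distrib[of 1 "1/3" p]
      by (simp add: X.scale_right_distrib X.scale_left_distrib[symmetric] algebra_simps)
    moreover have "x + scaleX 2 y = - q"
      unfolding x_def y_def using X.scale_left_distrib[of 1 "1/3" q]
      by (simp add: X.scale_right_distrib X.scale_left_distrib[symmetric] algebra_simps)
    moreover have "scaleX 3 x = scaleX 2 p + q" "scaleX 3 y = - (p + scaleX 2 q)"
      unfolding x_def y_def by simp_all
    ultimately have "f p + f (- q) = ?A + f (- (p + scaleX 2 q))" by (simp only:)
    hence "f p + - f q = ?A + - ?B" by (simp only: odd)
    hence e2: "f p - f q = ?A - ?B" by simp
    have "scaleY 2 ?B = scaleY 2 (f p + scaleY 2 (f q))"
    proof -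
      have "scaleY 2 ?B = (?A + ?B) - (?A - ?B)" using two[of ?B] by simp
      also have "\<dots> = scaleY 3 (f p) + scaleY 3 (f q) - (f p - f q)" using e1 e2 by simp
      also have "\<dots> = scaleY 2 (f p + scaleY 2 (f q))"
        using Y.scale_left_distrib[of 1 2 "f p"] Y.scale_left_distrib[of 3 1 "f q"]
        by (simp add: Y.scale_right_distrib algebra_simps)
      finally show ?thesis .
    qed
    hence B: "?B = f p + scaleY 2 (f q)" by simp
    have "?A = scaleY 3 (f p) + scaleY 3 (f q) - ?B" using e1 by (simp add: eq_diff_eq)
    also have "\<dots> = scaleY 2 (f p) + f q" unfolding B
      using Y.scale_left_distrib[of 1 2 "f p"] Y.scale_left_distrib[of 1 2 "f q"]
      by (simp add: algebra_simps)
    finally show "?A = scaleY 2 (f p) + f q" .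
  qed
  have add: "\<And>a b. f (a + b) = f a + f b"
  proof -
    fix a b
    have a: "a = scaleX 2 (scaleX (1/2) a)" by simp
    show "f (a + b) = f a + f b"
      by (subst (1 2) a, simp only: add2 dbl)
  qed
  have unit: "\<And>t z. f (scaleX (cis t) z) = scaleY (cis t) (f z)"
  proof -
    fix t z
    define s where "s = normalize_angle t + pi"
    have s: "0 < s" "s \<le> 2 * pi" using normalize_angle_normalized[of t] unfolding s_def by auto
    define \<mu> where "\<mu> = cis (s / n0)"
    have marc: "\<mu> \<in> arcT n0" unfolding arcT_def \<mu>_def using n0 s
      by (auto intro!: exI[of _ "s / n0"] simp: divide_right_mono)
    have "real n0 * (s / real n0) = s" using n0 by simp
    hence mp: "\<mu> ^ n0 = cis s" unfolding \<mu>_def by (metis Complex.DeMoivre)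
    have ct: "cis t = - (\<mu> ^ n0)" unfolding mp s_def minus_cis by (simp flip: cis_mult)
    show "f (scaleX (cis t) z) = scaleY (cis t) (f z)"
      unfolding ct using pow[OF marc, of n0 z] odd by simp
  qed
  have natm: "\<And>n w. f (scaleX (of_nat n) w) = scaleY (of_nat n) (f w)"
  proof -
    fix n w show "f (scaleX (of_nat n) w) = scaleY (of_nat n) (f w)"
      by (induction n) (simp_all add: X.scale_left_distrib Y.scale_left_distrib add f0)
  qed
  have small: "\<And>d w. cmod d \<le> 2 \<Longrightarrow> f (scaleX d w) = scaleY d (f w)"
  proof -
    fix d w assume d2: "cmod d \<le> 2"
    define a where "a = arccos (cmod d / 2)"
    have ca: "cos a = cmod d / 2" proof -
      have "0 \<le> cmod d" by simp
      hence "-1 \<le> cmod d / 2" "cmod d / 2 \<le> 1" using d2 by linarith+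
      thus ?thesis unfolding a_def by (intro cos_arccos)
    qed
    have "d = complex_of_real (cmod d) * cis (Arg d)"
      using rcis_cmod_Arg[of d] by (simp add: rcis_def)
    also have "complex_of_real (cmod d) = cis a + cis (- a)"
      using ca by (simp add: complex_eq_iff)
    finally have deq: "d = cis (a + Arg d) + cis (- a + Arg d)"
      by (simp add: distrib_right cis_mult)
    hence "scaleX d w = scaleX (cis (a + Arg d)) w + scaleX (cis (- a + Arg d)) w"
      by (metis X.scale_left_distrib)
    hence "f (scaleX d w) = scaleY (cis (a + Arg d)) (f w) + scaleY (cis (- a + Arg d)) (f w)"
      by (simp add: add unit)
    also have "\<dots> = scaleY d (f w)" by (metis deq Y.scale_left_distrib)
    finally show "f (scaleX d w) = scaleY d (f w)" .
  qed
  have sc: "\<And>c z. f (scaleX c z) = scaleY c (f z)"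
  proof -
    fix c z
    define n where "n = nat \<lceil>cmod c\<rceil> + 1"
    have "n > 0" unfolding n_def by simp
    hence npos: "real n > 0" by simp
    have nge: "cmod c \<le> real n" unfolding n_def by linarith
    define d where "d = c / of_nat n"
    have cd: "c = of_nat n * d" unfolding d_def using npos by simp
    have "cmod d = cmod c / real n" unfolding d_def by (simp add: norm_divide)
    also have "\<dots> \<le> 1" using nge npos by simp
    finally have dd: "cmod d \<le> 2" by simp
    have "f (scaleX c z) = f (scaleX (of_nat n) (scaleX d z))" unfolding cd by simp
    also have "\<dots> = scaleY (of_nat n) (scaleY d (f z))" by (simp only: natm small[OF dd])
    finally show "f (scaleX c z) = scaleY c (f z)" unfolding cd by simp
  qed
  show ?thesis unfolding Vector_Spaces.linear_iff using VX VY add sc by blast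
qed
theorem lemma2p9:
  fixes n0 :: nat
    and scaleX :: "complex \<Rightarrow> 'a::ab_group_add \<Rightarrow> 'a"
    and scaleY :: "complex \<Rightarrow> 'b::ab_group_add \<Rightarrow> 'b"
    and f :: "'a \<Rightarrow> 'b"
  assumes "n0 > 0"
    and "vector_space scaleX"
    and "vector_space scaleY"
  shows "(\<forall>x y. \<forall>\<mu>\<in>arcT n0.
            f (scaleX (2 * \<mu>) x + scaleX \<mu> y) + f (scaleX \<mu> x + scaleX (2 * \<mu>) y)
              = scaleY \<mu> (f (scaleX 3 x) + f (scaleX 3 y)))
         \<longleftrightarrow> Vector_Spaces.linear scaleX scaleY f"
proof
  assume "\<forall>x y. \<forall>\<mu>\<in>arcT n0.
            f (scaleX (2 * \<mu>) x + scaleX \<mu> y) + f (scaleX \<mu> x + scaleX (2 * \<mu>) y)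
              = scaleY \<mu> (f (scaleX 3 x) + f (scaleX 3 y))"
  thus "Vector_Spaces.linear scaleX scaleY f" using fwd assms by blast
next
  assume L: "Vector_Spaces.linear scaleX scaleY f"
  interpret Vector_Spaces.linear scaleX scaleY f by (fact L)
  show "\<forall>x y. \<forall>\<mu>\<in>arcT n0.
            f (scaleX (2 * \<mu>) x + scaleX \<mu> y) + f (scaleX \<mu> x + scaleX (2 * \<mu>) y)
              = scaleY \<mu> (f (scaleX 3 x) + f (scaleX 3 y))"
  proof (intro allI ballI)
    fix x y \<mu>
    have l: "scaleY (2 * \<mu>) a + scaleY \<mu> b + (scaleY \<mu> a + scaleY (2 * \<mu>) b) = scaleY \<mu> (scaleY 3 a + scaleY 3 b)" for a b
    proof -
      have e: "\<mu> * 2 + \<mu> = \<mu> * 3" by simp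
      show ?thesis
        using vs2.scale_left_distrib[of "\<mu>*2" \<mu> a] vs2.scale_left_distrib[of "\<mu>*2" \<mu> b]
        unfolding e by (simp add: vs2.scale_right_distrib algebra_simps)
    qed
    show "f (scaleX (2 * \<mu>) x + scaleX \<mu> y) + f (scaleX \<mu> x + scaleX (2 * \<mu>) y)
              = scaleY \<mu> (f (scaleX 3 x) + f (scaleX 3 y))"
      by (simp add: add scale l)
  qed
qed

end
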